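(* Consider the algorithm CCom described in the context. Then the fraction of bad IDs in the system is always at most $1/2$.
   Context: Model. IDs are good (follow the algorithm) or bad (controlled by a single adversary, which schedules joins and departures). The adversary controls at most an $\alpha\le1/6$ fraction of total computational power. Good IDs announce their departures; bad IDs need not. A committee (assumed to have a good majority and to act correctly via Byzantine consensus) runs the algorithm. Algorithm CCom. The committee maintains $\mathcal S_{\mathrm{old}}$ (IDs present after the most recent purge) and $\mathcal S$ (current IDs: joining IDs are added after solving an entrance puzzle, announced departures are removed). Whenever $|(\mathcal S\cup\mathcal S_{\mathrm{old}})\setminus(\mathcal S\cap\mathcal S_{\mathrm{old}})|\ge|\mathcal S_{\mathrm{old}}|/3$, a purge occurs: a fresh random string is broadcast and every ID must return within one round a solution to a $1$-round computational puzzle whose inputs include its public key and that string; IDs failing to do so are removed, and $\mathcal S_{\mathrm{old}},\mathcal S$ are reset to the IDs returning valid solutions. Epochs are the periods between consecutive purges. Initially fewer than a third of the IDs are bad, and at the end of every epoch the number of bad IDs is less than a third of all IDs. *)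

theory Defs
  imports Main
begin

(* State of the system under CCom: (S_old, S, P) where
   S_old = IDs present after the most recent purge (committee's view),
   S     = current IDs in the committee's view,
   P     = IDs actually present in the system.
   B is the (fixed) set of bad IDs; good IDs are those outside B. *)
type_synonym 'a ccom_state = "'a set \<times> 'a set \<times> 'a set"

definition purge_trigger :: "'a set \<Rightarrow> 'a set \<Rightarrow> bool" where
  "purge_trigger Sold S \<longleftrightarrow> 3 * card ((S \<union> Sold) - (S \<inter> Sold)) \<ge> card Sold"

(* In a purge, R is the set of IDs returning valid puzzle solutions: R \<subseteq> S,
   every good ID actually present solves the puzzle, and (standing assumption)
   at the end of every epoch fewer than a third of the IDs are bad. *)
inductive ccom_settle :: "'a set \<Rightarrow> 'a ccom_state \<Rightarrow> 'a ccom_state \<Rightarrow> bool"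
  for B :: "'a set" where
  no_purge: "\<not> purge_trigger Sold S \<Longrightarrow> ccom_settle B (Sold, S, P) (Sold, S, P)"
| purge: "purge_trigger Sold S \<Longrightarrow> R \<subseteq> S \<Longrightarrow> P - B \<subseteq> R \<Longrightarrow>
          3 * card (B \<inter> R) < card R \<Longrightarrow> ccom_settle B (Sold, S, P) (R, R, R)"

inductive ccom_reach :: "'a set \<Rightarrow> 'a set \<Rightarrow> 'a ccom_state \<Rightarrow> bool"
  for B :: "'a set" and S0 :: "'a set" where
  init: "ccom_reach B S0 (S0, S0, S0)"
| join: "ccom_reach B S0 (Sold, S, P) \<Longrightarrow> x \<notin> P \<Longrightarrow>
         ccom_settle B (Sold, insert x S, insert x P) st \<Longrightarrow> ccom_reach B S0 st"
| announced_depart: "ccom_reach B S0 (Sold, S, P) \<Longrightarrow> x \<in> P \<Longrightarrow>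
         ccom_settle B (Sold, S - {x}, P - {x}) st \<Longrightarrow> ccom_reach B S0 st"
| silent_depart: "ccom_reach B S0 (Sold, S, P) \<Longrightarrow> x \<in> P \<Longrightarrow> x \<in> B \<Longrightarrow>
         ccom_reach B S0 (Sold, S, P - {x})"

end

theory Submission
  imports Defs
begin

definition inv3 :: "'a set \<Rightarrow> 'a ccom_state \<Rightarrow> bool" where
  "inv3 B st = (case st of (Sold, S, P) \<Rightarrow> finite Sold \<and> finite S \<and> P \<subseteq> S \<and> S - P \<subseteq> B
     \<and> 3 * card (B \<inter> Sold) < card Sold \<and> \<not> purge_trigger Sold S)"

lemma settle_inv:
  assumes "ccom_settle B (Sold, S, P) st" "finite Sold" "finite S" "P \<subseteq> S" "S - P \<subseteq> B"
    "3 * card (B \<inter> Sold) < card Sold"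
  shows "inv3 B st"
  using assms(1)
proof cases
  case no_purge
  then show ?thesis using assms by (simp add: inv3_def)
next
  case (purge R)
  have "finite R" using purge assms(3) finite_subset by blast
  moreover have "R \<noteq> {}" using purge by auto
  ultimately show ?thesis using purge by (simp add: inv3_def purge_trigger_def)
qed

lemma reach_inv:
  assumes "ccom_reach B S0 st" "finite S0" "3 * card (B \<inter> S0) < card S0"
  shows "inv3 B st"
  using assms(1)
proof induction
  case init
  have "S0 \<noteq> {}" using assms by auto
  then show ?case using assms by (simp add: inv3_def purge_trigger_def)
next
  case (join Sold S P x st)
  show ?case
    by (rule settle_inv[OF join(3)]) (use join(2,4) in \<open>auto simp: inv3_def\<close>)
next
  case (announced_depart Sold S P x st)
  show ?case
    by (rule settle_inv[OF announced_depart(3)]) (use announced_depart(4) in \<open>auto simp: inv3_def\<close>)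
next
  case (silent_depart Sold S P x)
  then show ?case by (auto simp: inv3_def)
qed

lemma inv_bound:
  assumes "inv3 B (Sold, S, P)"
  shows "2 * card (B \<inter> P) \<le> card P"
proof -
  from assms have f: "finite Sold" "finite S" "P \<subseteq> S" "S - P \<subseteq> B"
    "3 * card (B \<inter> Sold) < card Sold" "3 * card ((S \<union> Sold) - (S \<inter> Sold)) < card Sold"
    by (auto simp: inv3_def purge_trigger_def)
  have fP: "finite P" using f finite_subset by blast
  have "card (B \<inter> P) \<le> card (B \<inter> S)"
    using f by (intro card_mono) auto
  also have "\<dots> \<le> card ((B \<inter> Sold) \<union> (S - Sold))"
    using f by (intro card_mono) auto
  also have "\<dots> \<le> card (B \<inter> Sold) + card (S - Sold)" by (rule card_Un_le)
  finally have h1: "card (B \<inter> P) \<le> card (B \<inter> Sold) + card (S - Sold)" .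
  have eqg: "P - B = S - B" using f by auto
  have "card (Sold - B) \<le> card ((S - B) \<union> (Sold - S))"
    using f by (intro card_mono) auto
  also have "\<dots> \<le> card (S - B) + card (Sold - S)" by (rule card_Un_le)
  finally have h2: "card (Sold - B) \<le> card (P - B) + card (Sold - S)" using eqg by simp
  have h3: "card Sold = card (B \<inter> Sold) + card (Sold - B)"
    using f card_Int_Diff[of Sold B] by (simp add: Int_commute)
  have "(S \<union> Sold) - (S \<inter> Sold) = (S - Sold) \<union> (Sold - S)" by auto
  hence h4: "card ((S \<union> Sold) - (S \<inter> Sold)) = card (S - Sold) + card (Sold - S)"
    using f by (simp add: card_Un_disjoint Diff_Int_distrib) (subst card_Un_disjoint; auto)
  have h5: "card P = card (B \<inter> P) + card (P - B)"
    using fP card_Int_Diff[of P B] by (simp add: Int_commute)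
  show ?thesis using h1 h2 h3 h4 h5 f(5,6) by linarith
qed

theorem lemma3:
  fixes B S0 :: "'a set"
  assumes "finite S0"
    and "3 * card (B \<inter> S0) < card S0"
    and "ccom_reach B S0 (Sold, S, P)"
  shows "2 * card (B \<inter> P) \<le> card P"
  using inv_bound reach_inv[OF assms(3,1,2)] by blast

end
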